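(* Let $y_1,\dots,y_n$ be $(n-1)$ times continuously differentiable on an open interval $I$. For $h\ne 0$ let $C_n^h(x)$ be the determinant of the $n\times n$ matrix whose $(i,j)$ entry is $y_j(x+(i-1)h)$, and let $W_n(x)$ be the determinant of the $n\times n$ matrix whose $(i,j)$ entry is $y_j^{(i-1)}(x)$, $i,j=1,\dots,n$. Then for every $x\in I$, $$\lim_{h\to 0}\frac{C_n^h(x)}{h^{n(n-1)/2}}=W_n(x).$$ *)

theory Defs
  imports "HOL-Analysis.Derivative" "Jordan_Normal_Form.Determinant"
begin

definition C_k_on :: "nat \<Rightarrow> real set \<Rightarrow> (real \<Rightarrow> real) \<Rightarrow> bool" where
  "C_k_on k S f \<longleftrightarrow>
     (\<forall>m<k. \<forall>x\<in>S. (deriv ^^ m) f differentiable (at x)) \<and>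
     continuous_on S ((deriv ^^ k) f)"

text \<open>Casoratian-type determinant C_n^h(x); indices shifted to start at 0.\<close>
definition casorati_det :: "nat \<Rightarrow> (nat \<Rightarrow> real \<Rightarrow> real) \<Rightarrow> real \<Rightarrow> real \<Rightarrow> real" where
  "casorati_det n y h x = det (mat n n (\<lambda>(i, j). y j (x + real i * h)))"

text \<open>Wronskian W_n(x); indices shifted to start at 0.\<close>
definition wronskian :: "nat \<Rightarrow> (nat \<Rightarrow> real \<Rightarrow> real) \<Rightarrow> real \<Rightarrow> real" where
  "wronskian n y x = det (mat n n (\<lambda>(i, j). (deriv ^^ i) (y j) x))"

end

theory Submission
  imports Defs
begin

definition dd :: "real \<Rightarrow> (real \<Rightarrow> real) \<Rightarrow> real \<Rightarrow> real" where
  "dd h g t = (g (t + h) - g t) / h"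

lemma deriv_funpow_shift: "(deriv ^^ m) (deriv g) = (deriv ^^ Suc m) g"
  by (simp add: funpow_Suc_right del: funpow.simps)

lemma dd_funpow_shift: "(dd h ^^ m) (dd h g) = (dd h ^^ Suc m) g"
  by (simp add: funpow_Suc_right del: funpow.simps)

lemma dd_deriv:
  "(\<forall>k\<le>i. (g has_real_derivative g' (s + real k * h)) (at (s + real k * h))) \<Longrightarrow>
   ((dd h ^^ i) g has_real_derivative (dd h ^^ i) g' s) (at s)"
proof (induction i arbitrary: g g')
  case 0
  then show ?case by (metis funpow_0 le_refl mult_zero_left of_nat_0 add_0_right)
next
  case (Suc i)
  have "\<forall>k\<le>i. (dd h g has_real_derivative dd h g' (s + real k * h)) (at (s + real k * h))"
  proof (intro allI impI)
    fix k assume k: "k \<le> i"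
    let ?u = "s + real k * h"
    have d1: "(g has_real_derivative g' ?u) (at ?u)" using Suc.prems k by auto
    have "(g has_real_derivative g' (?u + h)) (at (?u + h))"
      using Suc.prems[rule_format, of "Suc k"] k by (simp add: algebra_simps)
    hence d2: "((\<lambda>t. g (t + h)) has_real_derivative g' (?u + h)) (at ?u)"
      by (simp add: DERIV_shift)
    have "((\<lambda>t. (g (t + h) - g t) / h) has_real_derivative (g' (?u + h) - g' ?u) / h) (at ?u)"
      by (intro DERIV_cdivide DERIV_diff d1 d2)
    thus "(dd h g has_real_derivative dd h g' ?u) (at ?u)"
      by (simp add: dd_def[abs_def])
  qed
  from Suc.IH[OF this] show ?case by (simp add: dd_funpow_shift)
qed

lemma dd_coeffs:
  "\<exists>c. c i = (1::real) \<and> (\<forall>g t. h ^ i * (dd h ^^ i) g t = (\<Sum>k\<le>i. c k * g (t + real k * h)))"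
  if "h \<noteq> 0"
proof (induction i)
  case 0
  then show ?case by (intro exI[of _ "\<lambda>_. 1"]) simp
next
  case (Suc i)
  then obtain c where c1: "c i = 1"
    and c: "\<And>g t. h ^ i * (dd h ^^ i) g t = (\<Sum>k\<le>i. c k * g (t + real k * h))" by blast
  define c' where "c' k = (if k = 0 then 0 else c (k - 1)) - (if k \<le> i then c k else 0)" for k
  have "c' (Suc i) = 1" using c1 by (simp add: c'_def)
  moreover have "h ^ Suc i * (dd h ^^ Suc i) g t = (\<Sum>k\<le>Suc i. c' k * g (t + real k * h))" for g t
  proof -
    have "h ^ Suc i * (dd h ^^ Suc i) g t = h ^ i * (dd h ^^ i) g (t + h) - h ^ i * (dd h ^^ i) g t"
      using that by (simp add: dd_def field_simps power_Suc)
    also have "\<dots> = (\<Sum>k\<le>i. c k * g (t + real (Suc k) * h)) - (\<Sum>k\<le>i. c k * g (t + real k * h))"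
      by (simp add: c algebra_simps)
    also have "(\<Sum>k\<le>i. c k * g (t + real (Suc k) * h)) =
        (\<Sum>k\<le>Suc i. (if k = 0 then 0 else c (k - 1)) * g (t + real k * h))"
      by (subst sum.atMost_Suc_shift) simp
    also have "(\<Sum>k\<le>i. c k * g (t + real k * h)) =
        (\<Sum>k\<le>Suc i. (if k \<le> i then c k else 0) * g (t + real k * h))"
      by (simp add: sum.atMost_Suc)
    finally show ?thesis by (simp add: c'_def left_diff_distrib sum_subtractf)
  qed
  ultimately show ?case by blast
qed


lemma dd_lim:
  assumes "open I" "x \<in> I"
  shows "(\<forall>m<i. \<forall>z\<in>I. (deriv ^^ m) g differentiable at z) \<Longrightarrow> isCont ((deriv ^^ i) g) x \<Longrightarrow> \<epsilon> > 0 \<Longrightarrow>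
    \<exists>\<delta>>0. \<forall>h t. h \<noteq> 0 \<longrightarrow> \<bar>h\<bar> < \<delta> \<longrightarrow> \<bar>t - x\<bar> < \<delta> \<longrightarrow> \<bar>(dd h ^^ i) g t - (deriv ^^ i) g x\<bar> < \<epsilon>"
proof (induction i arbitrary: g \<epsilon>)
  case 0
  hence "g \<midarrow>x\<rightarrow> g x" by (simp add: isCont_def)
  then obtain s where s: "s > 0" "\<And>t. t \<noteq> x \<and> norm (t - x) < s \<Longrightarrow> norm (g t - g x) < \<epsilon>"
    using \<open>\<epsilon> > 0\<close> unfolding LIM_eq by blast
  show ?case
  proof (intro exI[of _ s] conjI allI impI)
    fix h t assume "\<bar>t - x\<bar> < s"
    then show "\<bar>(dd h ^^ 0) g t - (deriv ^^ 0) g x\<bar> < \<epsilon>"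
      using s \<open>\<epsilon> > 0\<close> by (cases "t = x") auto
  qed (use s in auto)
next
  case (Suc i)
  obtain r where r: "r > 0" "ball x r \<subseteq> I" using assms openE by blast
  have h1: "\<forall>m<i. \<forall>z\<in>I. (deriv ^^ m) (deriv g) differentiable at z"
    using Suc.prems(1) by (metis Suc_mono deriv_funpow_shift)
  have h2: "isCont ((deriv ^^ i) (deriv g)) x"
    using Suc.prems(2) by (simp add: deriv_funpow_shift)
  obtain d' where d': "d' > 0" "\<And>h t. h \<noteq> 0 \<Longrightarrow> \<bar>h\<bar> < d' \<Longrightarrow> \<bar>t - x\<bar> < d' \<Longrightarrow>
      \<bar>(dd h ^^ i) (deriv g) t - (deriv ^^ i) (deriv g) x\<bar> < \<epsilon>"
    using Suc.IH[OF h1 h2 Suc.prems(3)] by blast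
  have gd: "\<And>z. z \<in> I \<Longrightarrow> (g has_real_derivative deriv g z) (at z)"
    using Suc.prems(1) DERIV_deriv_iff_real_differentiable by (metis funpow_0 zero_less_Suc)
  define \<delta> where "\<delta> = min (d' / 2) (r / (real i + 3))"
  have \<delta>pos: "\<delta> > 0" using d' r by (simp add: \<delta>_def)
  show ?case
  proof (intro exI[of _ \<delta>] conjI allI impI \<delta>pos)
    fix h t assume h0: "h \<noteq> 0" and hd: "\<bar>h\<bar> < \<delta>" and td: "\<bar>t - x\<bar> < \<delta>"
    let ?G = "(dd h ^^ i) g" and ?G' = "(dd h ^^ i) (deriv g)"
    have der: "(?G has_real_derivative ?G' u) (at u)" if u: "\<bar>u - t\<bar> \<le> \<bar>h\<bar>" for u
    proof (rule dd_deriv, intro allI impI)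
      fix k assume k: "k \<le> i"
      have "\<bar>real k * h\<bar> \<le> real i * \<bar>h\<bar>"
        using k by (simp add: abs_mult mult_right_mono)
      hence "\<bar>u + real k * h - x\<bar> < \<delta> + \<delta> + real i * \<delta>"
        using u hd td \<delta>pos by (smt (verit) mult_left_mono of_nat_0_le_iff)
      also have "\<dots> = (real i + 2) * \<delta>" by (simp add: algebra_simps)
      also have "\<dots> \<le> (real i + 2) * (r / (real i + 3))"
        by (intro mult_left_mono) (auto simp: \<delta>_def)
      also have "\<dots> < r" using r by (simp add: field_simps)
      finally have "u + real k * h \<in> ball x r" by (simp add: dist_real_def abs_minus_commute)
      thus "(g has_real_derivative deriv g (u + real k * h)) (at (u + real k * h))"
        using r gd by blast
    qed
    obtain z where z: "\<bar>z - t\<bar> < \<bar>h\<bar>" "?G (t + h) - ?G t = h * ?G' z"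
    proof (cases "h > 0")
      case True
      from MVT2[of t "t + h" ?G ?G'] True der
      obtain z where "t < z" "z < t + h" "?G (t + h) - ?G t = (t + h - t) * ?G' z"
        by fastforce
      thus ?thesis using True by (intro that[of z]) auto
    next
      case False
      hence hn: "h < 0" using h0 by simp
      from MVT2[of "t + h" t ?G ?G'] hn der
      obtain z where "t + h < z" "z < t" "?G t - ?G (t + h) = (t - (t + h)) * ?G' z"
        by fastforce
      thus ?thesis using hn by (intro that[of z]) (auto simp: algebra_simps)
    qed
    have "(dd h ^^ Suc i) g t = dd h ?G t" by (simp only: funpow.simps comp_apply)
    also have "\<dots> = (?G (t + h) - ?G t) / h" by (rule dd_def)
    also have "\<dots> = ?G' z" using h0 by (simp only: z(2)) (rule nonzero_mult_div_cancel_left)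
    finally have "(dd h ^^ Suc i) g t = ?G' z" .
    moreover have a: "\<bar>h\<bar> < d' / 2" "\<bar>t - x\<bar> < d' / 2" using hd td by (auto simp: \<delta>_def)
    moreover have "\<bar>z - x\<bar> \<le> \<bar>z - t\<bar> + \<bar>t - x\<bar>" using abs_triangle_ineq[of "z - t" "t - x"] by simp
    hence "\<bar>z - x\<bar> < d'" using a z(1) by linarith
    moreover have "\<bar>h\<bar> < d'" using a by linarith
    ultimately have "(dd h ^^ Suc i) g t = ?G' z" "\<bar>?G' z - (deriv ^^ i) (deriv g) x\<bar> < \<epsilon>"
      using d'(2)[OF h0, of z] by blast+
    then show "\<bar>(dd h ^^ Suc i) g t - (deriv ^^ Suc i) g x\<bar> < \<epsilon>"
      by (simp add: deriv_funpow_shift)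
  qed
qed

lemma det_tendsto:
  fixes f :: "'a \<Rightarrow> nat \<Rightarrow> nat \<Rightarrow> real"
  assumes "\<And>i j. i < n \<Longrightarrow> j < n \<Longrightarrow> ((\<lambda>h. f h i j) \<longlongrightarrow> g i j) F"
  shows "((\<lambda>h. det (mat n n (\<lambda>(i, j). f h i j))) \<longlongrightarrow> det (mat n n (\<lambda>(i, j). g i j))) F"
proof -
  have eq: "det (mat n n (\<lambda>(i, j). f' i j)) =
     (\<Sum>p\<in>{p. p permutes {0..<n}}. signof p * (\<Prod>i = 0..<n. f' i (p i)))" for f' :: "nat \<Rightarrow> nat \<Rightarrow> real"
  proof -
    have "det (mat n n (\<lambda>(i, j). f' i j)) =
     (\<Sum>p\<in>{p. p permutes {0..<n}}. signof p * (\<Prod>i = 0..<n. mat n n (\<lambda>(i, j). f' i j) $$ (i, p i)))"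
      by (rule det_def') simp
    also have "\<dots> = (\<Sum>p\<in>{p. p permutes {0..<n}}. signof p * (\<Prod>i = 0..<n. f' i (p i)))"
    proof (intro sum.cong refl arg_cong2[where f="(*)"] prod.cong)
      fix p i assume "p \<in> {p. p permutes {0..<n}}" "i \<in> {0..<n}"
      hence "p i < n" by (metis atLeastLessThan_iff mem_Collect_eq permutes_in_image)
      thus "mat n n (\<lambda>(i, j). f' i j) $$ (i, p i) = f' i (p i)" using \<open>i \<in> _\<close> by simp
    qed
    finally show ?thesis .
  qed
  show ?thesis unfolding eq
  proof (intro tendsto_sum tendsto_mult tendsto_const tendsto_prod)
    fix p i assume "p \<in> {p. p permutes {0..<n}}" "i \<in> {0..<n}"
    hence "p i < n" by (metis atLeastLessThan_iff mem_Collect_eq permutes_in_image)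
    thus "((\<lambda>h. f h i (p i)) \<longlongrightarrow> g i (p i)) F" using assms \<open>i \<in> _\<close> by simp
  qed
qed


lemma sum_tri: "(\<Sum>i\<in>{0..<n}. i) = n * (n - 1) div (2::nat)"
proof (cases n)
  case (Suc m)
  have "{0..<Suc m} = {0..m}" by auto
  thus ?thesis using Suc gauss_sum_nat[of m] by (simp add: mult.commute)
qed simp

lemma det_diag_like:
  fixes d :: "nat \<Rightarrow> real"
  assumes "\<And>i j. i < j \<Longrightarrow> j < n \<Longrightarrow> f i j = 0"
  shows "det (mat n n (\<lambda>(i, j). f i j)) = (\<Prod>i\<in>{0..<n}. f i i)"
proof -
  have "det (mat n n (\<lambda>(i, j). f i j)) = prod_list (diag_mat (mat n n (\<lambda>(i, j). f i j)))"
    by (rule det_lower_triangular[of n]) (auto simp: assms)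
  also have "\<dots> = prod_list (map (\<lambda>i. f i i) [0..<n])"
    by (auto simp: diag_mat_def intro!: arg_cong[where f=prod_list] map_cong)
  also have "\<dots> = (\<Prod>i\<in>{0..<n}. f i i)"
    by (subst prod.distinct_set_conv_list[symmetric]) auto
  finally show ?thesis .
qed

theorem mainTheorem7:
  fixes n :: nat and y :: "nat \<Rightarrow> real \<Rightarrow> real" and I :: "real set" and x :: real
  assumes "open I" and "connected I"
    and "\<And>j. j < n \<Longrightarrow> C_k_on (n - 1) I (y j)"
    and "x \<in> I"
  shows "((\<lambda>h. casorati_det n y h x / h ^ (n * (n - 1) div 2)) \<longlongrightarrow> wronskian n y x) (at 0)"
proof -
  let ?N = "n * (n - 1) div 2"
  have key: "casorati_det n y h x / h ^ ?N = det (mat n n (\<lambda>(i, j). (dd h ^^ i) (y j) x))"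
    if h0: "h \<noteq> 0" for h
  proof -
    have "\<forall>i. \<exists>c. c i = 1 \<and> (\<forall>g t. h ^ i * (dd h ^^ i) g t = (\<Sum>k\<le>i. c k * g (t + real k * h)))"
      using dd_coeffs[OF h0] by blast
    then obtain coef where coef: "\<And>i. coef i i = 1"
      "\<And>i g t. h ^ i * (dd h ^^ i) g t = (\<Sum>k\<le>i. coef i k * g (t + real k * h))"
      by metis
    define Cm where "Cm = mat n n (\<lambda>(i, j). y j (x + real i * h))"
    define A where "A = mat n n (\<lambda>(i, j). (dd h ^^ i) (y j) x)"
    define D where "D = mat n n (\<lambda>(i, j). if i = j then h ^ i else (0::real))"
    define L where "L = mat n n (\<lambda>(i, k). if k \<le> i then coef i k else (0::real))"
    have DA: "D * A = L * Cm"
    proof (rule eq_matI)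
      fix i j assume i: "i < dim_row (L * Cm)" and j: "j < dim_col (L * Cm)"
      hence i: "i < n" and j: "j < n" by (auto simp: L_def Cm_def)
      have "(D * A) $$ (i, j) = (\<Sum>k\<in>{0..<n}. (if i = k then h ^ i else 0) * (dd h ^^ k) (y j) x)"
        using i j by (simp add: D_def A_def scalar_prod_def)
      also have "\<dots> = (\<Sum>k\<in>{0..<n}. if i = k then h ^ i * (dd h ^^ k) (y j) x else 0)"
        by (rule sum.cong) auto
      also have "\<dots> = h ^ i * (dd h ^^ i) (y j) x"
        using i by (simp add: sum.delta')
      also have "\<dots> = (\<Sum>k\<le>i. coef i k * y j (x + real k * h))" by (rule coef(2))
      also have "\<dots> = (\<Sum>k\<in>{k\<in>{0..<n}. k \<le> i}. coef i k * y j (x + real k * h))"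
        using i by (intro sum.cong) auto
      also have "\<dots> = (\<Sum>k\<in>{0..<n}. (if k \<le> i then coef i k else 0) * y j (x + real k * h))"
        by (subst sum.inter_filter) (auto intro: sum.cong)
      also have "\<dots> = (L * Cm) $$ (i, j)"
        using i j by (simp add: L_def Cm_def scalar_prod_def)
      finally show "(D * A) $$ (i, j) = (L * Cm) $$ (i, j)" .
    qed (auto simp: D_def A_def L_def Cm_def)
    have "det D * det A = det L * det Cm"
      using DA det_mult[of D n A] det_mult[of L n Cm]
      by (simp add: D_def A_def L_def Cm_def)
    moreover have "det D = h ^ ?N"
      unfolding D_def by (subst det_diag_like) (auto simp: power_sum[symmetric] sum_tri)
    moreover have "det L = 1"
      unfolding L_def by (subst det_diag_like) (auto simp: coef(1))
    ultimately have "h ^ ?N * det A = det Cm" by simp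
    thus ?thesis using h0 by (simp add: casorati_det_def Cm_def A_def field_simps)
  qed
  have entry: "((\<lambda>h. (dd h ^^ i) (y j) x) \<longlongrightarrow> (deriv ^^ i) (y j) x) (at 0)"
    if i: "i < n" and j: "j < n" for i j
  proof -
    have C: "\<forall>m<n - 1. \<forall>z\<in>I. (deriv ^^ m) (y j) differentiable at z"
      "continuous_on I ((deriv ^^ (n - 1)) (y j))"
      using assms(3)[OF j] by (auto simp: C_k_on_def)
    have H1: "\<forall>m<i. \<forall>z\<in>I. (deriv ^^ m) (y j) differentiable at z" using C(1) i by auto
    have H2: "isCont ((deriv ^^ i) (y j)) x"
    proof (cases "i < n - 1")
      case True
      hence "(deriv ^^ i) (y j) differentiable at x" using C(1) assms(4) by auto
      thus ?thesis by (simp add: differentiable_imp_continuous_within)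
    next
      case False
      hence "i = n - 1" using i by simp
      thus ?thesis using C(2) assms(1,4) continuous_on_eq_continuous_at by blast
    qed
    show ?thesis unfolding LIM_eq
    proof (intro allI impI)
      fix e :: real assume e: "e > 0"
      from dd_lim[OF assms(1) assms(4) H1 H2 e] obtain \<delta> where
        d: "\<delta> > 0" "\<forall>h t. h \<noteq> 0 \<longrightarrow> \<bar>h\<bar> < \<delta> \<longrightarrow> \<bar>t - x\<bar> < \<delta> \<longrightarrow>
           \<bar>(dd h ^^ i) (y j) t - (deriv ^^ i) (y j) x\<bar> < e" by blast
      show "\<exists>s>0. \<forall>h. h \<noteq> 0 \<and> norm (h - 0) < s \<longrightarrow>
          norm ((dd h ^^ i) (y j) x - (deriv ^^ i) (y j) x) < e"
        using d by (intro exI[of _ \<delta>]) auto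
    qed
  qed
  have lim: "((\<lambda>h. det (mat n n (\<lambda>(i, j). (dd h ^^ i) (y j) x))) \<longlongrightarrow> wronskian n y x) (at 0)"
    unfolding wronskian_def by (rule det_tendsto) (rule entry)
  have ev: "eventually (\<lambda>h. casorati_det n y h x / h ^ ?N =
      det (mat n n (\<lambda>(i, j). (dd h ^^ i) (y j) x))) (at (0::real))"
    using key by (auto simp: eventually_at_filter)
  show ?thesis using tendsto_cong[OF ev] lim by simp
qed

end
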